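(* Let $G$ be a group with finite generating set $T$ (with $T=T^{-1}$, $e\notin T$). Then there exist a group $H$ with a finite generating set $S$ (symmetric, $e\notin S$) and a homomorphism $\phi\colon G\to H$ such that (1) $\phi$ is an isometric embedding with respect to the word metrics of $(G,T)$ and $(H,S)$; (2) $\kappa(\phi(g))<0$ for all $g\in G\smallsetminus\{e\}$. In fact, $\kappa(h)<0$ for all $h\in H\smallsetminus\{e\}$ (curvature with respect to $S$).
   Context: For a group with finite generating set $S$ ($S=S^{-1}$, $e\notin S$), $|x|$ is word length, $\mathrm{Av}(g)=\frac{1}{|S|}\sum_{a\in S}|a^{-1}ga|$, and for $g\neq e$ the curvature is $\kappa(g)=\frac{|g|-\mathrm{Av}(g)}{|g|}$. *)

theory Defs
  imports "HOL-Algebra.Algebra"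
begin

definition fin_sym_gen_set :: "'a monoid \<Rightarrow> 'a set \<Rightarrow> bool" where
  "fin_sym_gen_set G S \<longleftrightarrow> finite S \<and> S \<subseteq> carrier G
     \<and> (\<forall>s\<in>S. inv\<^bsub>G\<^esub> s \<in> S) \<and> \<one>\<^bsub>G\<^esub> \<notin> S
     \<and> generate G S = carrier G"

definition word_prod :: "'a monoid \<Rightarrow> 'a list \<Rightarrow> 'a" where
  "word_prod G ws = foldr (\<lambda>x y. x \<otimes>\<^bsub>G\<^esub> y) ws \<one>\<^bsub>G\<^esub>"

definition word_length :: "'a monoid \<Rightarrow> 'a set \<Rightarrow> 'a \<Rightarrow> nat" where
  "word_length G S g = (LEAST n. \<exists>ws. length ws = n \<and> set ws \<subseteq> S \<and> word_prod G ws = g)"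

definition word_dist :: "'a monoid \<Rightarrow> 'a set \<Rightarrow> 'a \<Rightarrow> 'a \<Rightarrow> nat" where
  "word_dist G S g h = word_length G S (inv\<^bsub>G\<^esub> g \<otimes>\<^bsub>G\<^esub> h)"

definition Av :: "'a monoid \<Rightarrow> 'a set \<Rightarrow> 'a \<Rightarrow> real" where
  "Av G S g = (\<Sum>a\<in>S. real (word_length G S (inv\<^bsub>G\<^esub> a \<otimes>\<^bsub>G\<^esub> g \<otimes>\<^bsub>G\<^esub> a))) / real (card S)"

definition curvature :: "'a monoid \<Rightarrow> 'a set \<Rightarrow> 'a \<Rightarrow> real" where
  "curvature G S g = (real (word_length G S g) - Av G S g) / real (word_length G S g)"

end

theory Submission imports Defs begin

fun lam :: "'a monoid \<Rightarrow> ('a + nat) \<Rightarrow> ('a + nat) list \<Rightarrow> ('a + nat) list" where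
  "lam G (Inl g) w = (if g = \<one>\<^bsub>G\<^esub> then w else (case w of [] \<Rightarrow> [Inl g]
      | Inl h # r \<Rightarrow> (if g \<otimes>\<^bsub>G\<^esub> h = \<one>\<^bsub>G\<^esub> then r else Inl (g \<otimes>\<^bsub>G\<^esub> h) # r)
      | Inr n # r \<Rightarrow> Inl g # w))"
| "lam G (Inr n) w = (case w of Inr k # r \<Rightarrow> (if k = n then r else Inr n # w) | _ \<Rightarrow> Inr n # w)"

fun okp :: "('a + nat) \<Rightarrow> ('a + nat) \<Rightarrow> bool" where
  "okp (Inl _) (Inl _) = False"
| "okp (Inr a) (Inr b) = (a \<noteq> b)"
| "okp _ _ = True"

definition valid :: "'a monoid \<Rightarrow> nat \<Rightarrow> ('a + nat) \<Rightarrow> bool" where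
  "valid G m x = (case x of Inl g \<Rightarrow> g \<in> carrier G \<and> g \<noteq> \<one>\<^bsub>G\<^esub> | Inr n \<Rightarrow> n < m)"

definition red :: "'a monoid \<Rightarrow> nat \<Rightarrow> ('a + nat) list \<Rightarrow> bool" where
  "red G m w = ((\<forall>x\<in>set w. valid G m x) \<and> successively okp w)"

definition act :: "'a monoid \<Rightarrow> ('a + nat) list \<Rightarrow> ('a + nat) list \<Rightarrow> ('a + nat) list" where
  "act G w = foldr (\<lambda>x f. lam G x \<circ> f) w id"

definition FP :: "'a monoid \<Rightarrow> nat \<Rightarrow> ('a + nat) list monoid" where
  "FP G m = \<lparr>carrier = {w. red G m w}, monoid.mult = (\<lambda>u v. act G u v), one = []\<rparr>"

definition vx :: "'a monoid \<Rightarrow> nat \<Rightarrow> ('a + nat) \<Rightarrow> bool" where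
  "vx G m x = (case x of Inl g \<Rightarrow> g \<in> carrier G | Inr n \<Rightarrow> n < m)"

definition invl :: "'a monoid \<Rightarrow> ('a + nat) \<Rightarrow> ('a + nat)" where
  "invl G x = (case x of Inl g \<Rightarrow> Inl (inv\<^bsub>G\<^esub> g) | Inr n \<Rightarrow> Inr n)"

definition invw :: "'a monoid \<Rightarrow> ('a + nat) list \<Rightarrow> ('a + nat) list" where
  "invw G w = rev (map (invl G) w)"

lemma okp_invl [simp]: "okp (invl G y) (invl G x) = okp x y"
  by (cases x; cases y) (auto simp: invl_def)

lemma act_simps [simp]: "act G [] = id" "act G (x # w) = lam G x \<circ> act G w"
  by (auto simp: act_def)

lemma act_append [simp]: "act G (u @ v) = act G u \<circ> act G v"
  by (induction u) auto

lemma okp_Inl1 [simp]: "okp (Inl a) y \<longleftrightarrow> (case y of Inl _ \<Rightarrow> False | Inr _ \<Rightarrow> True)"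
  by (cases y) auto
lemma okp_Inl2 [simp]: "okp y (Inl a) \<longleftrightarrow> (case y of Inl _ \<Rightarrow> False | Inr _ \<Rightarrow> True)"
  by (cases y) auto

lemma red_Nil [simp]: "red G m []" by (simp add: red_def)

lemma red_Cons: "red G m (x # w) \<longleftrightarrow> valid G m x \<and> red G m w \<and> (w = [] \<or> okp x (hd w))"
  by (auto simp: red_def successively_Cons)

lemma okp_sym: "okp x y = okp y x"
  by (cases x; cases y) auto

context
  fixes G :: "'a monoid" and m :: nat
  assumes grp: "group G"
begin

interpretation G: group G by (rule grp)

lemma lam_red: "red G m w \<Longrightarrow> vx G m x \<Longrightarrow> red G m (lam G x w)"
proof (cases x)
  case (Inl g)
  assume r: "red G m w" and v: "vx G m x"
  then have g: "g \<in> carrier G" using Inl by (simp add: vx_def)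
  show ?thesis
  proof (cases "g = \<one>\<^bsub>G\<^esub>")
    case True then show ?thesis using r Inl by simp
  next
    case False
    show ?thesis
    proof (cases w)
      case Nil then show ?thesis using False Inl g by (simp add: red_Cons valid_def)
    next
      case (Cons y r')
      show ?thesis
      proof (cases y)
        case (Inl h)
        then show ?thesis using r Cons False g \<open>x = _\<close>
          by (auto simp: red_Cons valid_def)
      next
        case (Inr n)
        then show ?thesis using r Cons False g \<open>x = _\<close>
          by (auto simp: red_Cons valid_def)
      qed
    qed
  qed
next
  case (Inr n)
  assume r: "red G m w" and v: "vx G m x"
  then have n: "n < m" using Inr by (simp add: vx_def)
  show ?thesis
  proof (cases w)
    case Nil then show ?thesis using n Inr by (simp add: red_Cons valid_def)
  next
    case (Cons y r')
    show ?thesis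
    proof (cases y)
      case (Inl h)
      then show ?thesis using r Cons n \<open>x = _\<close> by (auto simp: red_Cons valid_def)
    next
      case (Inr k)
      then show ?thesis using r Cons n \<open>x = _\<close> by (auto simp: red_Cons valid_def)
    qed
  qed
qed

lemma lam_cons_red: "red G m (x # w) \<Longrightarrow> lam G x w = x # w"
proof (cases x)
  case (Inl g)
  assume r: "red G m (x # w)"
  then show ?thesis using Inl by (cases w) (auto simp: red_Cons valid_def split: sum.splits)
next
  case (Inr n)
  assume r: "red G m (x # w)"
  then show ?thesis using Inr by (cases w) (auto simp: red_Cons valid_def split: sum.splits)
qed

lemma lam_Inl_one [simp]: "lam G (Inl \<one>\<^bsub>G\<^esub>) w = w" by simp

lemma lam_Inl_comp:
  assumes r: "red G m w" and g: "g \<in> carrier G" and h: "h \<in> carrier G"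
  shows "lam G (Inl g) (lam G (Inl h) w) = lam G (Inl (g \<otimes>\<^bsub>G\<^esub> h)) w"
proof (cases "h = \<one>\<^bsub>G\<^esub>")
  case True then show ?thesis using g by simp
next
  case hne: False
  show ?thesis
  proof (cases "g = \<one>\<^bsub>G\<^esub>")
    case True then show ?thesis using h by simp
  next
    case gne: False
    show ?thesis
    proof (cases w)
      case Nil then show ?thesis using gne hne by simp
    next
      case (Cons y r')
      show ?thesis
      proof (cases y)
        case (Inl k)
        have k: "k \<in> carrier G" using r Cons Inl by (simp add: red_Cons valid_def)
        have kne: "k \<noteq> \<one>\<^bsub>G\<^esub>" using r Cons Inl by (simp add: red_Cons valid_def)
        have r'1: "lam G (Inl g) r' = (if g = \<one>\<^bsub>G\<^esub> then r' else Inl g # r')"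
          using r Cons Inl by (cases r') (auto simp: red_Cons split: sum.splits)
        show ?thesis
        proof (cases "h \<otimes>\<^bsub>G\<^esub> k = \<one>\<^bsub>G\<^esub>")
          case True
          then have e: "g \<otimes>\<^bsub>G\<^esub> h \<otimes>\<^bsub>G\<^esub> k = g" using g h k by (simp add: G.m_assoc)
          have L: "lam G (Inl g) (lam G (Inl h) w) = Inl g # r'" using True Cons Inl r'1 gne hne by simp
          show ?thesis
          proof (cases "g \<otimes>\<^bsub>G\<^esub> h = \<one>\<^bsub>G\<^esub>")
            case True2: True
            then have "g = k" using e k by simp
            then show ?thesis using L True2 Cons Inl by simp
          next
            case False2: False
            then show ?thesis using L e gne Cons Inl by simp
          qed
        next
          case False
          have f: "g \<otimes>\<^bsub>G\<^esub> h = \<one>\<^bsub>G\<^esub> \<Longrightarrow> g \<otimes>\<^bsub>G\<^esub> (h \<otimes>\<^bsub>G\<^esub> k) = k"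
            using g h k by (simp add: G.m_assoc[symmetric])
          then show ?thesis using False Cons Inl gne hne g h k kne by (auto simp: G.m_assoc)
        qed
      next
        case (Inr n)
        then show ?thesis using Cons gne hne by auto
      qed
    qed
  qed
qed

lemma lam_Inr_Inr: "red G m w \<Longrightarrow> lam G (Inr n) (lam G (Inr n) w) = w"
proof (cases w)
  case (Cons y r)
  assume rw: "red G m w"
  show ?thesis
  proof (cases y)
    case (Inr k)
    show ?thesis
    proof (cases "k = n")
      case True
      then show ?thesis using rw Cons Inr
        by (cases r) (auto simp: red_Cons split: sum.splits)
    qed (use Cons Inr in auto)
  qed (use Cons in auto)
qed simp

lemma act_red: "red G m w \<Longrightarrow> red G m v \<Longrightarrow> red G m (act G w v)"
proof (induction w)
  case Nil then show ?case by simp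
next
  case (Cons x w)
  have "vx G m x" using Cons.prems by (auto simp: red_Cons valid_def vx_def split: sum.splits)
  then show ?case using Cons by (auto simp: red_Cons intro: lam_red)
qed

lemma act_lam:
  assumes w: "red G m w" and v: "red G m v" and x: "vx G m x"
  shows "act G (lam G x w) v = lam G x (act G w v)"
proof (cases x)
  case (Inl g)
  have g: "g \<in> carrier G" using x Inl by (simp add: vx_def)
  show ?thesis
  proof (cases "g = \<one>\<^bsub>G\<^esub>")
    case True then show ?thesis using Inl by simp
  next
    case gne: False
    show ?thesis
    proof (cases w)
      case Nil then show ?thesis using gne Inl by simp
    next
      case (Cons y r)
      have rr: "red G m r" using w Cons by (simp add: red_Cons)
      have ar: "red G m (act G r v)" using act_red[OF rr v] .
      show ?thesis
      proof (cases y)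
        case (Inl k)
        have k: "k \<in> carrier G" using w Cons Inl by (simp add: red_Cons valid_def)
        show ?thesis
        proof (cases "g \<otimes>\<^bsub>G\<^esub> k = \<one>\<^bsub>G\<^esub>")
          case True
          then show ?thesis using Cons Inl \<open>x = _\<close> gne lam_Inl_comp[OF ar g k] by simp
        next
          case False
          then show ?thesis using Cons Inl \<open>x = _\<close> gne lam_Inl_comp[OF ar g k] by simp
        qed
      next
        case (Inr n)
        then show ?thesis using Cons \<open>x = _\<close> gne by simp
      qed
    qed
  qed
next
  case (Inr n)
  show ?thesis
  proof (cases w)
    case Nil then show ?thesis using Inr by simp
  next
    case (Cons y r)
    have rr: "red G m r" using w Cons by (simp add: red_Cons)
    have ar: "red G m (act G r v)" using act_red[OF rr v] .
    show ?thesis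
    proof (cases y)
      case (Inl k) then show ?thesis using Cons Inr by simp
    next
      case (Inr k)
      then show ?thesis using Cons \<open>x = Inr n\<close> lam_Inr_Inr[OF ar, of n] by auto
    qed
  qed
qed

lemma valid_vx: "valid G m x \<Longrightarrow> vx G m x"
  by (auto simp: valid_def vx_def split: sum.splits)

lemma act_assoc:
  assumes "red G m u" "red G m v" "red G m w"
  shows "act G (act G u v) w = act G u (act G v w)"
  using assms(1)
proof (induction u)
  case Nil then show ?case by simp
next
  case (Cons x u)
  have ru: "red G m u" and vxx: "vx G m x" using Cons.prems by (auto simp: red_Cons intro: valid_vx)
  have "act G (act G (x # u) v) w = act G (lam G x (act G u v)) w" by simp
  also have "\<dots> = lam G x (act G (act G u v) w)"
    by (rule act_lam[OF act_red[OF ru assms(2)] assms(3) vxx])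
  also have "\<dots> = act G (x # u) (act G v w)" using Cons.IH[OF ru] by simp
  finally show ?case .
qed

lemma act_Nil: "red G m w \<Longrightarrow> act G w [] = w"
proof (induction w)
  case Nil then show ?case by simp
next
  case (Cons x w)
  then have "red G m w" by (simp add: red_Cons)
  then show ?case using Cons lam_cons_red[OF Cons.prems] by simp
qed

lemma red_invw: "red G m w \<Longrightarrow> red G m (invw G w)"
proof -
  assume r: "red G m w"
  have "successively okp (invw G w)" using r by (simp add: red_def invw_def successively_map okp_sym)
  moreover have "\<forall>x\<in>set (invw G w). valid G m x" using r
    by (auto simp: red_def invw_def valid_def invl_def split: sum.splits)
  ultimately show ?thesis by (simp add: red_def)
qed

lemma lam_inv: "red G m u \<Longrightarrow> vx G m x \<Longrightarrow> lam G (invl G x) (lam G x u) = u"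
proof (cases x)
  case (Inl g)
  assume "red G m u" "vx G m x"
  then show ?thesis using Inl lam_Inl_comp[of u "inv\<^bsub>G\<^esub> g" g] by (simp add: vx_def invl_def)
next
  case (Inr n)
  assume "red G m u" "vx G m x"
  then show ?thesis using Inr lam_Inr_Inr by (simp add: invl_def)
qed

lemma act_invw: "red G m w \<Longrightarrow> red G m v \<Longrightarrow> act G (invw G w) (act G w v) = v"
proof (induction w)
  case Nil then show ?case by (simp add: invw_def)
next
  case (Cons x w)
  have ru: "red G m w" and vxx: "vx G m x" using Cons.prems by (auto simp: red_Cons intro: valid_vx)
  have "act G (invw G (x # w)) (act G (x # w) v) = act G (invw G w) (lam G (invl G x) (lam G x (act G w v)))"
    by (simp add: invw_def)
  also have "\<dots> = v" using lam_inv[OF act_red[OF ru Cons.prems(2)] vxx] Cons.IH[OF ru Cons.prems(2)] by simp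
  finally show ?case .
qed

lemma FP_group: "group (FP G m)"
proof (rule groupI)
  fix x y assume "x \<in> carrier (FP G m)" "y \<in> carrier (FP G m)"
  then show "x \<otimes>\<^bsub>FP G m\<^esub> y \<in> carrier (FP G m)" by (simp add: FP_def act_red)
next
  show "\<one>\<^bsub>FP G m\<^esub> \<in> carrier (FP G m)" by (simp add: FP_def)
next
  fix x y z assume "x \<in> carrier (FP G m)" "y \<in> carrier (FP G m)" "z \<in> carrier (FP G m)"
  then show "x \<otimes>\<^bsub>FP G m\<^esub> y \<otimes>\<^bsub>FP G m\<^esub> z = x \<otimes>\<^bsub>FP G m\<^esub> (y \<otimes>\<^bsub>FP G m\<^esub> z)"
    by (simp add: FP_def act_assoc)
next
  fix x assume "x \<in> carrier (FP G m)"
  then show "\<one>\<^bsub>FP G m\<^esub> \<otimes>\<^bsub>FP G m\<^esub> x = x" by (simp add: FP_def)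
next
  fix x assume x: "x \<in> carrier (FP G m)"
  then have "red G m x" by (simp add: FP_def)
  then show "\<exists>y\<in>carrier (FP G m). y \<otimes>\<^bsub>FP G m\<^esub> x = \<one>\<^bsub>FP G m\<^esub>"
    using red_invw act_invw[of x "[]"] act_Nil by (auto simp: FP_def intro!: bexI[of _ "invw G x"])
qed

lemma FP_simps [simp]: "carrier (FP G m) = {w. red G m w}" "u \<otimes>\<^bsub>FP G m\<^esub> v = act G u v" "\<one>\<^bsub>FP G m\<^esub> = []"
  by (simp_all add: FP_def)

definition phi :: "'a \<Rightarrow> ('a + nat) list" where "phi g = lam G (Inl g) []"

lemma act_phi: "act G (phi g) = lam G (Inl g)"
  by (auto simp: phi_def)

lemma phi_hom: "phi \<in> hom G (FP G m)"
proof (rule homI)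
  fix x assume "x \<in> carrier G" then show "phi x \<in> carrier (FP G m)"
    by (auto simp: phi_def red_Cons valid_def)
next
  fix x y assume "x \<in> carrier G" "y \<in> carrier G"
  then show "phi (x \<otimes>\<^bsub>G\<^esub> y) = phi x \<otimes>\<^bsub>FP G m\<^esub> phi y"
    using lam_Inl_comp[of "[]" x y] by (simp add: act_phi phi_def)
qed

end

lemma word_prod_simps [simp]: "word_prod G [] = \<one>\<^bsub>G\<^esub>" "word_prod G (x # xs) = x \<otimes>\<^bsub>G\<^esub> word_prod G xs"
  by (simp_all add: word_prod_def)

context
  fixes G :: "'a monoid" and S :: "'a set"
  assumes grp: "group G" and gs: "fin_sym_gen_set G S"
begin

interpretation G: group G by (rule grp)

lemma S_carr: "S \<subseteq> carrier G" using gs by (simp add: fin_sym_gen_set_def)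
lemma S_inv: "s \<in> S \<Longrightarrow> inv\<^bsub>G\<^esub> s \<in> S" using gs by (simp add: fin_sym_gen_set_def)
lemma S_one: "\<one>\<^bsub>G\<^esub> \<notin> S" using gs by (simp add: fin_sym_gen_set_def)
lemma S_gen: "generate G S = carrier G" using gs by (simp add: fin_sym_gen_set_def)
lemma S_fin: "finite S" using gs by (simp add: fin_sym_gen_set_def)

lemma wp_carr: "set ws \<subseteq> carrier G \<Longrightarrow> word_prod G ws \<in> carrier G"
  by (induction ws) auto

lemma wp_append: "set u \<subseteq> carrier G \<Longrightarrow> set v \<subseteq> carrier G \<Longrightarrow>
   word_prod G (u @ v) = word_prod G u \<otimes>\<^bsub>G\<^esub> word_prod G v"
  by (induction u) (auto simp: wp_carr G.m_assoc)

lemma gen_word: "g \<in> generate G S \<Longrightarrow> \<exists>ws. set ws \<subseteq> S \<and> word_prod G ws = g"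
proof (induction rule: generate.induct)
  case one then show ?case by (intro exI[of _ "[]"]) simp
next
  case (incl h) then show ?case using S_carr by (intro exI[of _ "[h]"]) auto
next
  case (inv h) then show ?case using S_carr S_inv by (intro exI[of _ "[inv\<^bsub>G\<^esub> h]"]) auto
next
  case (eng h1 h2)
  then obtain u v where "set u \<subseteq> S" "word_prod G u = h1" "set v \<subseteq> S" "word_prod G v = h2" by blast
  then show ?case using wp_append[of u v] S_carr by (intro exI[of _ "u @ v"]) auto
qed

lemma wl_ex: "g \<in> carrier G \<Longrightarrow> \<exists>ws. length ws = word_length G S g \<and> set ws \<subseteq> S \<and> word_prod G ws = g"
proof -
  assume "g \<in> carrier G"
  then obtain ws where "set ws \<subseteq> S \<and> word_prod G ws = g" using gen_word S_gen by blast
  then have "\<exists>n ws. length ws = n \<and> set ws \<subseteq> S \<and> word_prod G ws = g" by blast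
  then show ?thesis unfolding word_length_def by (rule LeastI_ex)
qed

lemma wl_le: "set ws \<subseteq> S \<Longrightarrow> word_prod G ws = g \<Longrightarrow> word_length G S g \<le> length ws"
  unfolding word_length_def by (rule Least_le) blast

lemma wl_one: "word_length G S \<one>\<^bsub>G\<^esub> = 0"
  using wl_le[of "[]"] by simp

lemma wl_zero: "g \<in> carrier G \<Longrightarrow> word_length G S g = 0 \<Longrightarrow> g = \<one>\<^bsub>G\<^esub>"
  using wl_ex by fastforce

lemma wl_mult: "g \<in> carrier G \<Longrightarrow> h \<in> carrier G \<Longrightarrow> word_length G S (g \<otimes>\<^bsub>G\<^esub> h) \<le> word_length G S g + word_length G S h"
proof -
  assume g: "g \<in> carrier G" and h: "h \<in> carrier G"
  obtain u where u: "length u = word_length G S g" "set u \<subseteq> S" "word_prod G u = g" using wl_ex[OF g] by blast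
  obtain v where v: "length v = word_length G S h" "set v \<subseteq> S" "word_prod G v = h" using wl_ex[OF h] by blast
  have "word_prod G (u @ v) = g \<otimes>\<^bsub>G\<^esub> h" using wp_append[of u v] u v S_carr by auto
  then have "word_length G S (g \<otimes>\<^bsub>G\<^esub> h) \<le> length (u @ v)" using wl_le[of "u @ v"] u v by auto
  then show ?thesis using u v by simp
qed

lemma wl_gen: "s \<in> S \<Longrightarrow> word_length G S s \<le> 1"
  using wl_le[of "[s]" s] S_carr by auto

lemma wl_conj: "a \<in> S \<Longrightarrow> h \<in> carrier G \<Longrightarrow>
   word_length G S h \<le> word_length G S (inv\<^bsub>G\<^esub> a \<otimes>\<^bsub>G\<^esub> h \<otimes>\<^bsub>G\<^esub> a) + 2"
proof -
  assume a: "a \<in> S" and h: "h \<in> carrier G"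
  have ac: "a \<in> carrier G" using a S_carr by auto
  define c where "c = inv\<^bsub>G\<^esub> a \<otimes>\<^bsub>G\<^esub> h \<otimes>\<^bsub>G\<^esub> a"
  have cc: "c \<in> carrier G" using ac h by (simp add: c_def)
  have "h = a \<otimes>\<^bsub>G\<^esub> c \<otimes>\<^bsub>G\<^esub> inv\<^bsub>G\<^esub> a" using ac h unfolding c_def by (metis G.inv_closed G.m_assoc G.m_closed G.r_inv G.r_one G.inv_solve_left)
  then have "word_length G S h \<le> word_length G S (a \<otimes>\<^bsub>G\<^esub> c) + word_length G S (inv\<^bsub>G\<^esub> a)"
    using wl_mult[of "a \<otimes>\<^bsub>G\<^esub> c" "inv\<^bsub>G\<^esub> a"] ac cc by simp
  also have "\<dots> \<le> word_length G S a + word_length G S c + word_length G S (inv\<^bsub>G\<^esub> a)"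
    using wl_mult[OF ac cc] by simp
  finally show ?thesis using wl_gen[OF a] wl_gen[OF S_inv[OF a]] by (simp add: c_def)
qed

end

definition SH :: "'a set \<Rightarrow> nat \<Rightarrow> ('a + nat) list set" where
  "SH T m = (\<lambda>t. [Inl t]) ` T \<union> (\<lambda>n. [Inr n]) ` {..<m}"

definition Lc :: "'a monoid \<Rightarrow> 'a set \<Rightarrow> ('a + nat) \<Rightarrow> nat" where
  "Lc G T x = (case x of Inl g \<Rightarrow> word_length G T g | Inr n \<Rightarrow> 1)"

definition LL :: "'a monoid \<Rightarrow> 'a set \<Rightarrow> ('a + nat) list \<Rightarrow> nat" where
  "LL G T w = sum_list (map (Lc G T) w)"

lemma LL_simps [simp]: "LL G T [] = 0" "LL G T (x # w) = Lc G T x + LL G T w"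
  by (simp_all add: LL_def)

context
  fixes G :: "'a monoid" and T :: "'a set" and m :: nat
  assumes grp: "group G" and gs: "fin_sym_gen_set G T"
begin

interpretation G: group G by (rule grp)
interpretation H: group "FP G m" by (rule FP_group[OF grp])

lemma phi_ne: "g \<noteq> \<one>\<^bsub>G\<^esub> \<Longrightarrow> phi G g = [Inl g]" by (simp add: phi_def)
lemma phi_one: "phi G \<one>\<^bsub>G\<^esub> = []" by (simp add: phi_def)

lemma T_carr: "t \<in> T \<Longrightarrow> t \<in> carrier G" using S_carr[OF grp gs] by auto
lemma T_ne: "t \<in> T \<Longrightarrow> t \<noteq> \<one>\<^bsub>G\<^esub>" using S_one[OF grp gs] by auto

lemma inv_Inl: assumes t: "t \<in> T" shows "inv\<^bsub>FP G m\<^esub> [Inl t] = [Inl (inv\<^bsub>G\<^esub> t)]"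
proof (rule H.inv_equality)
  have tc: "t \<in> carrier G" "t \<noteq> \<one>\<^bsub>G\<^esub>" using T_carr[OF t] T_ne[OF t] by auto
  then show "[Inl (inv\<^bsub>G\<^esub> t)] \<otimes>\<^bsub>FP G m\<^esub> [Inl t] = \<one>\<^bsub>FP G m\<^esub>" by simp
  show "[Inl t] \<in> carrier (FP G m)" using tc by (simp add: red_Cons valid_def)
  show "[Inl (inv\<^bsub>G\<^esub> t)] \<in> carrier (FP G m)" using tc by (simp add: red_Cons valid_def)
qed

lemma inv_Inr: assumes n: "n < m" shows "inv\<^bsub>FP G m\<^esub> [Inr n] = [Inr n]"
proof (rule H.inv_equality)
  show "[Inr n] \<otimes>\<^bsub>FP G m\<^esub> [Inr n] = \<one>\<^bsub>FP G m\<^esub>" by simp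
  show "[Inr n] \<in> carrier (FP G m)" using n by (simp add: red_Cons valid_def)
  then show "[Inr n] \<in> carrier (FP G m)" .
qed

lemma SH_carr: "SH T m \<subseteq> carrier (FP G m)"
  using T_carr T_ne by (auto simp: SH_def red_Cons valid_def)

lemma phi_gen: "g \<in> generate G T \<Longrightarrow> phi G g \<in> generate (FP G m) (SH T m)"
proof (induction rule: generate.induct)
  case one then show ?case using phi_one generate.one[of "FP G m"] by simp
next
  case (incl h) then show ?case using phi_ne[OF T_ne] by (auto simp: SH_def intro: generate.incl)
next
  case (inv h)
  then have "inv\<^bsub>G\<^esub> h \<in> T" using S_inv[OF grp gs] by auto
  then show ?case using phi_ne[OF T_ne] by (auto simp: SH_def intro: generate.incl)
next
  case (eng h1 h2)
  have "h1 \<in> carrier G" "h2 \<in> carrier G" using eng.hyps S_gen[OF grp gs] by auto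
  then have "phi G (h1 \<otimes>\<^bsub>G\<^esub> h2) = phi G h1 \<otimes>\<^bsub>FP G m\<^esub> phi G h2"
    using phi_hom[OF grp, of m] by (simp add: hom_mult)
  then show ?case using eng.IH generate.eng by metis
qed

lemma red_gen: "red G m w \<Longrightarrow> w \<in> generate (FP G m) (SH T m)"
proof (induction w)
  case Nil then show ?case using generate.one[of "FP G m"] by simp
next
  case (Cons x w)
  have rw: "red G m w" using Cons.prems by (simp add: red_Cons)
  have e: "x # w = [x] \<otimes>\<^bsub>FP G m\<^esub> w" using lam_cons_red[OF grp Cons.prems] by simp
  have "[x] \<in> generate (FP G m) (SH T m)"
  proof (cases x)
    case (Inl g)
    then have "g \<in> carrier G" "g \<noteq> \<one>\<^bsub>G\<^esub>" using Cons.prems by (auto simp: red_Cons valid_def)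
    then show ?thesis using phi_gen[of g] phi_ne Inl S_gen[OF grp gs] by auto
  next
    case (Inr n)
    then have "n < m" using Cons.prems by (auto simp: red_Cons valid_def)
    then show ?thesis using Inr by (auto simp: SH_def intro: generate.incl)
  qed
  then show ?case using e Cons.IH[OF rw] generate.eng by metis
qed

lemma SH_gs: "fin_sym_gen_set (FP G m) (SH T m)"
proof -
  have "finite (SH T m)" using S_fin[OF grp gs] by (simp add: SH_def)
  moreover have "\<forall>s\<in>SH T m. inv\<^bsub>FP G m\<^esub> s \<in> SH T m"
    using inv_Inl inv_Inr S_inv[OF grp gs] by (auto simp: SH_def)
  moreover have "\<one>\<^bsub>FP G m\<^esub> \<notin> SH T m" by (auto simp: SH_def)
  moreover have "generate (FP G m) (SH T m) = carrier (FP G m)"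
    using H.generate_incl[OF SH_carr] red_gen by auto
  ultimately show ?thesis using SH_carr by (simp add: fin_sym_gen_set_def)
qed

end

context
  fixes G :: "'a monoid" and T :: "'a set" and m :: nat
  assumes grp: "group G" and gs: "fin_sym_gen_set G T"
begin

interpretation G: group G by (rule grp)
interpretation H: group "FP G m" by (rule FP_group[OF grp])

lemma L_lam:
  assumes v: "red G m v" and x: "(\<exists>t\<in>T. x = Inl t) \<or> (\<exists>n<m. x = Inr n)"
  shows "LL G T (lam G x v) \<le> LL G T v + 1"
  using x
proof
  assume "\<exists>t\<in>T. x = Inl t"
  then obtain t where t: "t \<in> T" and xt: "x = Inl t" by blast
  have tc: "t \<in> carrier G" and tn: "t \<noteq> \<one>\<^bsub>G\<^esub>" using T_carr[OF grp gs t] T_ne[OF grp gs t] by auto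
  have wt: "word_length G T t \<le> 1" using wl_gen[OF grp gs t] .
  show ?thesis
  proof (cases v)
    case Nil then show ?thesis using xt tn wt by (simp add: Lc_def)
  next
    case (Cons y r)
    show ?thesis
    proof (cases y)
      case (Inl k)
      have kc: "k \<in> carrier G" using v Cons Inl by (simp add: red_Cons valid_def)
      have "word_length G T (t \<otimes>\<^bsub>G\<^esub> k) \<le> word_length G T t + word_length G T k"
        using wl_mult[OF grp gs tc kc] .
      then show ?thesis using xt tn wt Cons Inl by (auto simp: Lc_def)
    next
      case (Inr n) then show ?thesis using xt tn wt Cons by (simp add: Lc_def)
    qed
  qed
next
  assume "\<exists>n<m. x = Inr n"
  then obtain n where xn: "x = Inr n" by blast
  show ?thesis
  proof (cases v)
    case Nil then show ?thesis using xn by (simp add: Lc_def)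
  next
    case (Cons y r)
    show ?thesis
    proof (cases y)
      case (Inl k) then show ?thesis using xn Cons by (simp add: Lc_def)
    next
      case (Inr k) then show ?thesis using xn Cons by (auto simp: Lc_def)
    qed
  qed
qed

lemma L_le: "set ws \<subseteq> SH T m \<Longrightarrow> LL G T (word_prod (FP G m) ws) \<le> length ws"
proof (induction ws)
  case Nil then show ?case by (simp add: word_prod_def)
next
  case (Cons s ws)
  have c: "word_prod (FP G m) ws \<in> carrier (FP G m)"
    using wp_carr[OF FP_group[OF grp, where m=m] SH_gs[OF grp gs, where m=m]] SH_carr[OF grp gs, where m=m] Cons.prems by auto
  from Cons.prems have "s \<in> SH T m" by simp
  then obtain x where s: "s = [x]" and x: "(\<exists>t\<in>T. x = Inl t) \<or> (\<exists>n<m. x = Inr n)"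
    by (auto simp: SH_def)
  have "LL G T (word_prod (FP G m) (s # ws)) = LL G T (lam G x (word_prod (FP G m) ws))" using s by simp
  also have "\<dots> \<le> LL G T (word_prod (FP G m) ws) + 1" using L_lam[OF _ x] c by simp
  finally show ?case using Cons by simp
qed

lemma wp_phi: "set ts \<subseteq> carrier G \<Longrightarrow> word_prod (FP G m) (map (phi G) ts) = phi G (word_prod G ts)"
proof (induction ts)
  case Nil then show ?case by (simp add: phi_one[OF grp gs])
next
  case (Cons t ts)
  have "word_prod G ts \<in> carrier G" using wp_carr[OF grp gs] Cons.prems by auto
  then show ?case using Cons phi_hom[OF grp, of m] by (simp add: hom_mult)
qed

lemma L_word: "red G m w \<Longrightarrow> \<exists>ws. set ws \<subseteq> SH T m \<and> length ws = LL G T w \<and> word_prod (FP G m) ws = w"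
proof (induction w)
  case Nil then show ?case by (intro exI[of _ "[]"]) simp
next
  case (Cons x w)
  have rw: "red G m w" using Cons.prems by (simp add: red_Cons)
  obtain ws2 where w2: "set ws2 \<subseteq> SH T m" "length ws2 = LL G T w" "word_prod (FP G m) ws2 = w"
    using Cons.IH[OF rw] by blast
  have e: "x # w = [x] \<otimes>\<^bsub>FP G m\<^esub> w" using lam_cons_red[OF grp Cons.prems] by simp
  have "\<exists>ws1. set ws1 \<subseteq> SH T m \<and> length ws1 = Lc G T x \<and> word_prod (FP G m) ws1 = [x]"
  proof (cases x)
    case (Inl g)
    then have g: "g \<in> carrier G" "g \<noteq> \<one>\<^bsub>G\<^esub>" using Cons.prems by (auto simp: red_Cons valid_def)
    obtain ts where ts: "length ts = word_length G T g" "set ts \<subseteq> T" "word_prod G ts = g"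
      using wl_ex[OF grp gs g(1)] by blast
    have "set ts \<subseteq> carrier G" using ts T_carr[OF grp gs] by auto
    then have "word_prod (FP G m) (map (phi G) ts) = [x]" using wp_phi ts phi_ne[OF grp gs g(2)] Inl by simp
    moreover have "set (map (phi G) ts) \<subseteq> SH T m"
      using ts phi_ne[OF grp gs T_ne[OF grp gs]] by (auto simp: SH_def)
    ultimately show ?thesis using ts Inl by (intro exI[of _ "map (phi G) ts"]) (simp add: Lc_def)
  next
    case (Inr n)
    then have "n < m" using Cons.prems by (auto simp: red_Cons valid_def)
    then show ?thesis using Inr by (intro exI[of _ "[[Inr n]]"]) (auto simp: SH_def Lc_def word_prod_def)
  qed
  then obtain ws1 where w1: "set ws1 \<subseteq> SH T m" "length ws1 = Lc G T x" "word_prod (FP G m) ws1 = [x]"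
    by blast
  have "word_prod (FP G m) (ws1 @ ws2) = x # w"
    using wp_append[OF FP_group[OF grp, where m=m] SH_gs[OF grp gs, where m=m], where u=ws1 and v=ws2] w1 w2 SH_carr[OF grp gs, where m=m] e by auto
  then show ?case using w1 w2 by (intro exI[of _ "ws1 @ ws2"]) auto
qed

lemma wl_H: "red G m w \<Longrightarrow> word_length (FP G m) (SH T m) w = LL G T w"
proof -
  assume r: "red G m w"
  obtain ws where ws: "set ws \<subseteq> SH T m" "length ws = LL G T w" "word_prod (FP G m) ws = w"
    using L_word[OF r] by blast
  have le: "word_length (FP G m) (SH T m) w \<le> LL G T w"
    using wl_le[OF FP_group[OF grp, where m=m] SH_gs[OF grp gs, where m=m] ws(1) ws(3)] ws(2) by simp
  obtain vs where vs: "length vs = word_length (FP G m) (SH T m) w" "set vs \<subseteq> SH T m" "word_prod (FP G m) vs = w"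
    using wl_ex[OF FP_group[OF grp, where m=m] SH_gs[OF grp gs, where m=m], of w] r by auto
  have "LL G T w \<le> word_length (FP G m) (SH T m) w" using L_le[OF vs(2)] vs by simp
  then show ?thesis using le by simp
qed

end

lemma LL_append [simp]: "LL G T (u @ v) = LL G T u + LL G T v" by (simp add: LL_def)

lemma okp_Inr1: "okp (Inr k) y \<longleftrightarrow> y \<noteq> Inr k" by (cases y) auto
lemma okp_Inr2: "okp y (Inr k) \<longleftrightarrow> y \<noteq> Inr k" by (cases y) auto

context
  fixes G :: "'a monoid" and T :: "'a set" and m :: nat
  assumes grp: "group G" and gs: "fin_sym_gen_set G T"
begin

interpretation G: group G by (rule grp)
interpretation H: group "FP G m" by (rule FP_group[OF grp])

lemma act_app: "red G m (h @ v) \<Longrightarrow> act G h v = h @ v"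
proof (induction h)
  case Nil then show ?case by simp
next
  case (Cons x r)
  have "red G m (r @ v)" using Cons.prems by (simp add: red_Cons)
  then show ?case using Cons lam_cons_red[OF grp, of m x "r @ v"] by simp
qed

lemma conj_good:
  assumes h: "red G m h" "h \<noteq> []" and k: "k < m" "hd h \<noteq> Inr k" "last h \<noteq> Inr k"
  shows "word_length (FP G m) (SH T m) (inv\<^bsub>FP G m\<^esub> [Inr k] \<otimes>\<^bsub>FP G m\<^esub> h \<otimes>\<^bsub>FP G m\<^esub> [Inr k])
     = word_length (FP G m) (SH T m) h + 2"
proof -
  have r: "red G m (Inr k # h @ [Inr k])"
    using h k by (auto simp: red_def valid_def successively_append_iff successively_Cons okp_Inr1 okp_Inr2)
  then have r2: "red G m (h @ [Inr k])" by (simp add: red_Cons)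
  have "inv\<^bsub>FP G m\<^esub> [Inr k] \<otimes>\<^bsub>FP G m\<^esub> h \<otimes>\<^bsub>FP G m\<^esub> [Inr k] = Inr k # h @ [Inr k]"
    using inv_Inr[OF grp gs k(1)] act_app[OF r2] lam_cons_red[OF grp r]
      H.m_assoc[of "[Inr k]" h "[Inr k]"] h k by (simp add: red_Cons valid_def)
  then show ?thesis using wl_H[OF grp gs r] wl_H[OF grp gs h(1)] by (simp add: Lc_def)
qed

end

context
  fixes G :: "'a monoid" and T :: "'a set" and m :: nat
  assumes grp: "group G" and gs: "fin_sym_gen_set G T"
begin

interpretation G: group G by (rule grp)
interpretation H: group "FP G m" by (rule FP_group[OF grp])

lemma curv_neg:
  assumes mT: "m = card T + 5" and h: "red G m h" "h \<noteq> []"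
  shows "curvature (FP G m) (SH T m) h < 0"
proof -
  let ?H = "FP G m" and ?S = "SH T m"
  define n where "n = word_length ?H ?S h"
  define c where "c a = real (word_length ?H ?S (inv\<^bsub>?H\<^esub> a \<otimes>\<^bsub>?H\<^esub> h \<otimes>\<^bsub>?H\<^esub> a))" for a
  have hc: "h \<in> carrier ?H" using h by simp
  have npos: "n > 0"
  proof (rule ccontr)
    assume "\<not> n > 0"
    then have "h = \<one>\<^bsub>?H\<^esub>" using wl_zero[OF FP_group[OF grp] SH_gs[OF grp gs] hc] by (simp add: n_def)
    then show False using h by simp
  qed
  define B where "B = {projr (hd h), projr (last h)}"
  have cB: "card B \<le> 2" unfolding B_def by (simp add: card_insert_if)
  define Gd where "Gd = (\<lambda>k. [Inr k :: 'a + nat]) ` ({..<m} - B)"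
  have cGd: "card Gd \<ge> m - 2"
  proof -
    have "card Gd = card ({..<m} - B)" unfolding Gd_def by (rule card_image) (auto simp: inj_on_def)
    moreover have "card {..<m} - card B \<le> card ({..<m} - B)" by (rule diff_card_le_card_Diff) (simp add: B_def)
    ultimately show ?thesis using cB by simp
  qed
  have GdS: "Gd \<subseteq> ?S" by (auto simp: Gd_def SH_def)
  have finS: "finite ?S" by (simp add: SH_def S_fin[OF grp gs])
  have cS: "card ?S \<le> card T + m"
  proof -
    have "card ?S \<le> card ((\<lambda>t. [Inl t :: 'a + nat]) ` T) + card ((\<lambda>n. [Inr n :: 'a + nat]) ` {..<m})"
      unfolding SH_def by (simp add: card_Un_le)
    also have "\<dots> \<le> card T + m" using card_image_le[of T "\<lambda>t. [Inl t :: 'a + nat]"] card_image_le[of "{..<m}" "\<lambda>n. [Inr n :: 'a + nat]"]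
      S_fin[OF grp gs] by simp
    finally show ?thesis .
  qed
  have good: "c a = real n + 2" if aG: "a \<in> Gd" for a
  proof -
    obtain k where k: "k < m" "k \<notin> B" "a = [Inr k]" using aG by (auto simp: Gd_def)
    have "hd h \<noteq> Inr k" "last h \<noteq> Inr k" using k(2) by (auto simp: B_def)
    then show ?thesis using conj_good[OF grp gs h k(1)] k(3) by (simp add: c_def n_def)
  qed
  have all: "real n - 2 \<le> c a" if "a \<in> ?S" for a
    using wl_conj[OF FP_group[OF grp] SH_gs[OF grp gs] that hc] by (simp add: c_def n_def)
  have s1: "sum c ?S = sum c (?S - Gd) + sum c Gd" by (rule sum.subset_diff[OF GdS finS])
  have s2: "sum c Gd = real (card Gd) * (real n + 2)" using good by simp
  have s3: "real (card (?S - Gd)) * (real n - 2) \<le> sum c (?S - Gd)"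
    by (rule sum_bounded_below) (use all in auto)
  have s4: "card (?S - Gd) = card ?S - card Gd" by (rule card_Diff_subset) (use GdS finS in \<open>auto intro: finite_subset\<close>)
  have cle: "card Gd \<le> card ?S" by (rule card_mono[OF finS GdS])
  have s5: "real (card (?S - Gd)) = real (card ?S) - real (card Gd)" using s4 cle by simp
  have "sum c ?S \<ge> (real (card ?S) - real (card Gd)) * (real n - 2) + real (card Gd) * (real n + 2)"
    using s1 s2 s3 s5 by simp
  moreover have "(real (card ?S) - real (card Gd)) * (real n - 2) + real (card Gd) * (real n + 2)
      = real (card ?S) * real n - 2 * real (card ?S) + 4 * real (card Gd)" by (simp add: algebra_simps)
  moreover have "- 2 * real (card ?S) + 4 * real (card Gd) > 0" using cS cGd mT by linarith
  ultimately have big: "sum c ?S > real (card ?S) * real n" by linarith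
  have cSpos: "card ?S > 0" using cGd mT cle by linarith
  have "Av ?H ?S h = sum c ?S / real (card ?S)" by (simp add: Av_def c_def)
  then have "Av ?H ?S h > real n" using big cSpos by (simp add: pos_less_divide_eq mult.commute)
  then show ?thesis unfolding curvature_def n_def[symmetric] using npos
    by (simp add: divide_neg_pos)
qed

end

theorem mainTheorem12:
  fixes G :: "'a monoid" and T :: "'a set"
  assumes "group G" and "fin_sym_gen_set G T"
  shows "\<exists>(H :: ('a + nat) list monoid) S \<phi>.
           group H \<and> fin_sym_gen_set H S \<and> \<phi> \<in> hom G H
         \<and> (\<forall>g\<in>carrier G. \<forall>g'\<in>carrier G. word_dist H S (\<phi> g) (\<phi> g') = word_dist G T g g')
         \<and> (\<forall>g\<in>carrier G - {\<one>\<^bsub>G\<^esub>}. curvature H S (\<phi> g) < 0)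
         \<and> (\<forall>h\<in>carrier H - {\<one>\<^bsub>H\<^esub>}. curvature H S h < 0)"
proof -
  note grp = assms(1) and gs = assms(2)
  interpret G: group G by (rule grp)
  define m where "m = card T + 5"
  interpret H: group "FP G m" by (rule FP_group[OF grp])
  have hom: "phi G \<in> hom G (FP G m)" by (rule phi_hom[OF grp])
  have pc: "phi G g \<in> carrier (FP G m)" if "g \<in> carrier G" for g
    using hom that by (simp add: hom_def Pi_def)
  have curvH: "\<forall>h\<in>carrier (FP G m) - {\<one>\<^bsub>FP G m\<^esub>}. curvature (FP G m) (SH T m) h < 0"
    using curv_neg[OF grp gs m_def] by simp
  have iso: "word_dist (FP G m) (SH T m) (phi G g) (phi G g') = word_dist G T g g'"
    if g: "g \<in> carrier G" and g': "g' \<in> carrier G" for g g'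
  proof -
    have "phi G (inv\<^bsub>G\<^esub> g) \<otimes>\<^bsub>FP G m\<^esub> phi G g = phi G (inv\<^bsub>G\<^esub> g \<otimes>\<^bsub>G\<^esub> g)"
      using hom_mult[OF hom G.inv_closed[OF g] g] by simp
    also have "\<dots> = \<one>\<^bsub>FP G m\<^esub>" using g by (simp add: phi_one[OF grp gs])
    finally have inv: "inv\<^bsub>FP G m\<^esub> (phi G g) = phi G (inv\<^bsub>G\<^esub> g)"
      by (rule H.inv_equality) (use g pc in auto)
    define k where "k = inv\<^bsub>G\<^esub> g \<otimes>\<^bsub>G\<^esub> g'"
    have kc: "k \<in> carrier G" using g g' by (simp add: k_def)
    have e: "inv\<^bsub>FP G m\<^esub> (phi G g) \<otimes>\<^bsub>FP G m\<^esub> phi G g' = phi G k"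
      using inv hom_mult[OF hom G.inv_closed[OF g] g'] by (simp add: k_def)
    have "word_length (FP G m) (SH T m) (phi G k) = word_length G T k"
    proof (cases "k = \<one>\<^bsub>G\<^esub>")
      case True then show ?thesis
        using wl_one[OF FP_group[OF grp] SH_gs[OF grp gs]] wl_one[OF grp gs] phi_one[OF grp gs] by simp
    next
      case False
      then have "red G m (phi G k)" using pc[OF kc] by simp
      then show ?thesis using wl_H[OF grp gs] phi_ne[OF grp gs False] by (simp add: Lc_def)
    qed
    then show ?thesis using e by (simp add: word_dist_def k_def)
  qed
  have curvG: "\<forall>g\<in>carrier G - {\<one>\<^bsub>G\<^esub>}. curvature (FP G m) (SH T m) (phi G g) < 0"
  proof
    fix g assume "g \<in> carrier G - {\<one>\<^bsub>G\<^esub>}"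
    then have "phi G g \<in> carrier (FP G m) - {\<one>\<^bsub>FP G m\<^esub>}" using pc[of g] phi_ne[OF grp gs, of g] by auto
    then show "curvature (FP G m) (SH T m) (phi G g) < 0" using curvH by blast
  qed
  show ?thesis
    using FP_group[OF grp] SH_gs[OF grp gs] hom iso curvG curvH by blast
qed

end
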